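(* Fix a policy $\pi$ with information set $\mathcal{I}$ in a finite-horizon POMDP $\mathcal{M}$ with $S$ states and $O$ observations, and let beliefs be computed as described in the context. For each state trajectory $\tau_{\mathcal{S}}$ with $p^\pi(\tau_{\mathcal{S}})>0$ define $$\mathbb{P}(\mathcal{T}_{\mathcal{O}}\mid\tau_{\mathcal{S}})=\sum_{\tau_{\mathcal{O}}:\,H(d(\tau_{\mathcal{O}}))\ge H(d(\tau_{\mathcal{S}}))}p^\pi(\tau_{\mathcal{O}}\mid\tau_{\mathcal{S}}),\qquad J^{\mathcal{O}}(\pi\mid\tau_{\mathcal{S}})=\mathbb{E}_{\tau_{\mathcal{O}}\sim p^\pi(\cdot\mid\tau_{\mathcal{S}})}[H(d(\tau_{\mathcal{O}}))],$$ $$\bar p_{\mathcal{S}}(\tau_{\mathcal{S}})=\mathbb{E}_{\tau_{\mathcal{B}}\sim p^\pi(\cdot\mid\tau_{\mathcal{S}})}\Big[\sum_{\tau_{\tilde{\mathcal{S}}}:\,H(d(\tau_{\tilde{\mathcal{S}}}))\ge H(d(\tau_{\mathcal{S}}))}\ \prod_{t=1}^T\bm{b}_t(\tilde s_t)\Big],\qquad \tilde J(\pi\mid\tau_{\mathcal{S}})=\mathbb{E}_{\tau_{\mathcal{B}}\sim p^\pi(\cdot\mid\tau_{\mathcal{S}})}\mathbb{E}_{\tau_{\tilde{\mathcal{S}}}\sim p(\cdot\mid\tau_{\mathcal{B}})}[H(d(\tau_{\tilde{\mathcal{S}}}))].$$ Assume $0<\mathbb{P}(\mathcal{T}_{\mathcal{O}}\mid\tau_{\mathcal{S}})<1$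 and $0<\bar p_{\mathcal{S}}(\tau_{\mathcal{S}})<1$ for all such $\tau_{\mathcal{S}}$. Then, with $J^{\mathcal{S}}(\pi)=\mathbb{E}_{\tau_{\mathcal{S}}\sim p^\pi}[H(d(\tau_{\mathcal{S}}))]$, $$\mathbb{E}_{\tau_{\mathcal{S}}\sim p^\pi}\Big[\frac{J^{\mathcal{O}}(\pi\mid\tau_{\mathcal{S}})-\mathbb{P}(\mathcal{T}_{\mathcal{O}}\mid\tau_{\mathcal{S}})\log O}{1-\mathbb{P}(\mathcal{T}_{\mathcal{O}}\mid\tau_{\mathcal{S}})}\Big]\le J^{\mathcal{S}}(\pi)\le\mathbb{E}_{\tau_{\mathcal{S}}\sim p^\pi}\Big[\frac{J^{\mathcal{O}}(\pi\mid\tau_{\mathcal{S}})}{\mathbb{P}(\mathcal{T}_{\mathcal{O}}\mid\tau_{\mathcal{S}})}\Big],$$ and $$\mathbb{E}_{\tau_{\mathcal{S}}\sim p^\pi}\Big[\frac{\tilde J(\pi\mid\tau_{\mathcal{S}})-\bar p_{\mathcal{S}}(\tau_{\mathcal{S}})\log S}{1-\bar p_{\mathcal{S}}(\tau_{\mathcal{S}})}\Big]\le J^{\mathcal{S}}(\pi)\le\mathbb{E}_{\tau_{\mathcal{S}}\sim p^\pi}\Big[\frac{\tilde J(\pi\mid\tau_{\mathcal{S}})}{\bar p_{\mathcal{S}}(\tau_{\mathcal{S}})}\Big].$$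
   Context: A finite-horizon POMDP $\mathcal{M}=(\mathcal{S},\mathcal{A},\mathcal{O},\mathbb{P},\mathbb{O},T,\mu)$ has finite state set ($S=|\mathcal{S}|$), action set, observation set ($O=|\mathcal{O}|$), transition kernel $\mathbb{P}$, observation kernel $\mathbb{O}$, horizon $T$, initial distribution $\mu$. Under a policy $\pi:\mathcal{I}\to\Delta(\mathcal{A})$: $s_1\sim\mu$, $o_t\sim\mathbb{O}(\cdot\mid s_t)$, and for $t<T$, $a_t\sim\pi(\cdot\mid i_t)$, $s_{t+1}\sim\mathbb{P}(\cdot\mid s_t,a_t)$, with $i_t$ a deterministic function of $(o_1,a_1,\dots,a_{t-1},o_t)$. Beliefs $\bm{b}_t\in\Delta(\mathcal{S})$ are deterministic functions of $(o_1,a_1,\dots,a_{t-1},o_t)$ (exact or approximate Bayesian beliefs), $\tau_{\mathcal{B}}=(\bm{b}_1,\dots,\bm{b}_T)$. $p^\pi$ is the law of the joint trajectory (state trajectory $\tau_{\mathcal{S}}=(s_1,\dots,s_T)$, observation trajectory $\tau_{\mathcal{O}}=(o_1,\dots,o_T)$, actions, beliefs), and $p^\pi(\cdot\mid\tau_{\mathcal{S}})$ denotes conditional laws given the state trajectory. A believed trajectory $\tau_{\tilde{\mathcal{S}}}=(\tilde s_1,\dots,\tilde s_T)\in\mathcal{S}^T$ is drawn given $\tau_{\mathcal{B}}$ with probability $p(\tau_{\tilde{\mathcal{S}}}\mid\tau_{\mathcal{B}})=\prod_t\bm{b}_t(\tilde s_t)$. For a sequence $x=(x_1,\dots,x_T)$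 over a finite set, $d(x)$ is its empirical distribution $d_y(x)=\frac1T\sum_t\mathbf{1}\{x_t=y\}$ and $H$ is Shannon entropy (natural log). *)

theory Defs
  imports "HOL-Probability.Probability"
begin

(* Finite-horizon POMDP.  States 's, actions 'a, observations 'o are finite types.
   Time is 0-indexed: t = 0 .. T-1 corresponds to t = 1 .. T in the paper. *)
record ('s, 'a, 'o) pomdp =
  init  :: "'s pmf"
  trans :: "'s \<Rightarrow> 'a \<Rightarrow> 's pmf"
  obsk  :: "'s \<Rightarrow> 'o pmf"
  hor   :: nat

definition trajs :: "nat \<Rightarrow> 'x list set" where
  "trajs n = {xs. length xs = n}"

(* information i_t = info t (o_1..o_t) (a_1..a_{t-1}); policy pi : I -> Delta(A).
   Probability mass of the joint trajectory (states ss, observations os, actions as). *)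
definition joint_prob ::
  "('s, 'a, 'o) pomdp \<Rightarrow> (nat \<Rightarrow> 'o list \<Rightarrow> 'a list \<Rightarrow> 'i) \<Rightarrow> ('i \<Rightarrow> 'a pmf)
     \<Rightarrow> 's list \<Rightarrow> 'o list \<Rightarrow> 'a list \<Rightarrow> real" where
  "joint_prob M info pol ss os as =
     pmf (init M) (ss ! 0)
     * (\<Prod>t<hor M. pmf (obsk M (ss ! t)) (os ! t))
     * (\<Prod>t<hor M - 1. pmf (pol (info t (take (Suc t) os) (take t as))) (as ! t)
                       * pmf (trans M (ss ! t) (as ! t)) (ss ! Suc t))"

definition state_prob ::
  "('s, 'a, 'o) pomdp \<Rightarrow> (nat \<Rightarrow> 'o list \<Rightarrow> 'a list \<Rightarrow> 'i) \<Rightarrow> ('i \<Rightarrow> 'a pmf)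
     \<Rightarrow> 's list \<Rightarrow> real" where
  "state_prob M info pol ss =
     (\<Sum>os\<in>trajs (hor M). \<Sum>as\<in>trajs (hor M - 1). joint_prob M info pol ss os as)"

definition cond_exp ::
  "('s, 'a, 'o) pomdp \<Rightarrow> (nat \<Rightarrow> 'o list \<Rightarrow> 'a list \<Rightarrow> 'i) \<Rightarrow> ('i \<Rightarrow> 'a pmf)
     \<Rightarrow> 's list \<Rightarrow> ('o list \<Rightarrow> 'a list \<Rightarrow> real) \<Rightarrow> real" where
  "cond_exp M info pol ss f =
     (\<Sum>os\<in>trajs (hor M). \<Sum>as\<in>trajs (hor M - 1). joint_prob M info pol ss os as * f os as)
     / state_prob M info pol ss"

definition belief_traj ::
  "nat \<Rightarrow> (nat \<Rightarrow> 'o list \<Rightarrow> 'a list \<Rightarrow> 's pmf) \<Rightarrow> 'o list \<Rightarrow> 'a list \<Rightarrow> 's pmf list" where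
  "belief_traj T bel os as = map (\<lambda>t. bel t (take (Suc t) os) (take t as)) [0..<T]"

definition believed_prob :: "'s pmf list \<Rightarrow> 's list \<Rightarrow> real" where
  "believed_prob bs sts = (\<Prod>t<length bs. pmf (bs ! t) (sts ! t))"

(* empirical distribution and Shannon entropy (natural log; 0 ln 0 = 0) *)
definition emp :: "'x list \<Rightarrow> 'x \<Rightarrow> real" where
  "emp xs y = real (count_list xs y) / real (length xs)"

definition entropy_fin :: "('x::finite \<Rightarrow> real) \<Rightarrow> real" where
  "entropy_fin d = - (\<Sum>y\<in>UNIV. d y * ln (d y))"

definition Hd :: "'x::finite list \<Rightarrow> real" where
  "Hd xs = entropy_fin (emp xs)"

definition P_TO where
  "P_TO M info pol ss =
     cond_exp M info pol ss (\<lambda>os as. if Hd os \<ge> Hd ss then 1 else 0)"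

definition J_O_cond where
  "J_O_cond M info pol ss = cond_exp M info pol ss (\<lambda>os as. Hd os)"

definition pbar_S where
  "pbar_S M info pol bel ss =
     cond_exp M info pol ss (\<lambda>os as.
        \<Sum>sts\<in>{sts\<in>trajs (hor M). Hd sts \<ge> Hd ss}.
           believed_prob (belief_traj (hor M) bel os as) sts)"

definition J_tilde_cond where
  "J_tilde_cond M info pol bel ss =
     cond_exp M info pol ss (\<lambda>os as.
        \<Sum>sts\<in>trajs (hor M). believed_prob (belief_traj (hor M) bel os as) sts * Hd sts)"

definition J_S where
  "J_S M info pol = (\<Sum>ss\<in>trajs (hor M). state_prob M info pol ss * Hd ss)"

definition E_S where
  "E_S M info pol g =
     (\<Sum>ss\<in>{ss\<in>trajs (hor M). state_prob M info pol ss > 0}. state_prob M info pol ss * g ss)"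

end

theory Submission
  imports Defs
begin

lemma finite_trajs[simp]: "finite (trajs n :: ('x::finite) list set)"
  unfolding trajs_def using finite_lists_length_eq[of "UNIV::'x set" n] by simp

lemma emp_sum: assumes "length xs > 0" shows "(\<Sum>y\<in>(UNIV::'x::finite set). emp xs y) = 1"
proof -
  have "(\<Sum>y\<in>(UNIV::'x set). emp xs y) = (\<Sum>y\<in>UNIV. real (count_list xs y)) / real (length xs)"
    unfolding emp_def by (simp add: sum_divide_distrib)
  also have "(\<Sum>y\<in>(UNIV::'x set). real (count_list xs y)) = real (length xs)"
    using sum_count_set[of xs "UNIV::'x set"] by (metis finite_class.finite_UNIV of_nat_sum subset_UNIV)
  finally show ?thesis using assms by simp
qed

lemma emp_nonneg: "emp xs y \<ge> 0" unfolding emp_def by simp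

lemma emp_le1: "emp xs y \<le> 1"
proof (cases "length xs = 0")
  case False
  have "count_list xs y \<le> length xs" by (simp add: count_list_eq_length_filter)
  then show ?thesis using False unfolding emp_def by (simp add: divide_le_eq_1)
qed (simp add: emp_def)

lemma Hd_nonneg: "Hd xs \<ge> 0"
proof -
  have "\<And>y. emp xs y * ln (emp xs y) \<le> 0"
    using emp_nonneg emp_le1 by (metis ln_le_zero_iff mult_nonneg_nonpos mult_zero_left order_le_less)
  then have "(\<Sum>y\<in>UNIV. emp xs y * ln (emp xs y)) \<le> 0" by (simp add: sum_nonpos)
  then show ?thesis unfolding Hd_def entropy_fin_def by simp
qed

lemma Hd_le: assumes "length (xs::'x::finite list) > 0" shows "Hd xs \<le> ln (real CARD('x))"
proof -
  define n where "n = real CARD('x)"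
  have n0: "n > 0" unfolding n_def by simp
  have tm: "- emp xs y * ln (emp xs y) - emp xs y * ln n \<le> 1/n - emp xs y" for y
  proof (cases "emp xs y = 0")
    case True then show ?thesis using n0 by simp
  next
    case False
    define d where "d = emp xs y"
    have d0: "d > 0" using False emp_nonneg[of xs y] unfolding d_def by simp
    have "ln (1/(n*d)) \<le> 1/(n*d) - 1" using ln_le_minus_one[of "1/(n*d)"] d0 n0 by simp
    moreover have "ln (1/(n*d)) = - ln n - ln d" using d0 n0 by (simp add: ln_div ln_mult)
    ultimately have "d * (- ln n - ln d) \<le> d * (1/(n*d) - 1)"
      using d0 by (intro mult_left_mono) auto
    moreover have "d*(1/(n*d)-1) = 1/n - d" using d0 n0 by (simp add: field_simps)
    moreover have "d * (- ln n - ln d) = - d * ln d - d * ln n" by (simp add: algebra_simps)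
    ultimately have "- d * ln d - d * ln n \<le> 1/n - d" by linarith
    then show ?thesis unfolding d_def .
  qed
  have "(\<Sum>y\<in>(UNIV::'x set). - emp xs y * ln (emp xs y) - emp xs y * ln n) \<le> (\<Sum>y\<in>(UNIV::'x set). 1/n - emp xs y)"
    by (intro sum_mono tm)
  also have "\<dots> = 0" using emp_sum[OF assms] n0 unfolding n_def by (simp add: sum_subtractf)
  finally have "(\<Sum>y\<in>(UNIV::'x set). - emp xs y * ln (emp xs y)) - ln n * (\<Sum>y\<in>(UNIV::'x set). emp xs y) \<le> 0"
    by (simp add: sum_subtractf sum_distrib_left mult.commute)
  then show ?thesis using emp_sum[OF assms] unfolding Hd_def entropy_fin_def n_def
    by (simp add: sum_negf)
qed

lemma trajs_Suc: "trajs (Suc n) = (\<lambda>(x,xs). x#xs) ` (UNIV \<times> trajs n)"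
  unfolding trajs_def by (auto simp: image_iff length_Suc_conv)

lemma believed_sum1:
  "length bs = n \<Longrightarrow> (\<Sum>sts\<in>trajs n. \<Prod>t<n. pmf (bs!t) (sts!t :: 'x::finite)) = 1"
proof (induction bs arbitrary: n)
  case Nil then show ?case by (simp add: trajs_def)
next
  case (Cons b bs)
  then obtain m where n: "n = Suc m" and m: "length bs = m" by auto
  have inj: "inj_on (\<lambda>(x,xs). x#xs) (UNIV \<times> trajs m)" by (auto simp: inj_on_def)
  have "(\<Sum>sts\<in>trajs n. \<Prod>t<n. pmf ((b#bs)!t) (sts!t :: 'x))
      = (\<Sum>(x,xs)\<in>UNIV \<times> trajs m. \<Prod>t<Suc m. pmf ((b#bs)!t) ((x#xs)!t))"
    unfolding n trajs_Suc by (subst sum.reindex[OF inj]) (simp add: case_prod_beta)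
  also have "\<dots> = (\<Sum>x\<in>UNIV. \<Sum>xs\<in>trajs m. pmf b x * (\<Prod>t<m. pmf (bs!t) (xs!t)))"
    unfolding prod.lessThan_Suc_shift by (subst sum.cartesian_product[symmetric]) simp
  also have "\<dots> = (\<Sum>x\<in>UNIV. pmf b x)"
    by (simp add: sum_distrib_left[symmetric] Cons.IH[OF m])
  also have "\<dots> = 1" by (rule sum_pmf_eq_1) auto
  finally show ?case .
qed

lemma believed_nonneg: "believed_prob bs sts \<ge> 0"
  unfolding believed_prob_def by (simp add: prod_nonneg)

lemma believed_sum:
  "(\<Sum>sts\<in>trajs T. believed_prob (belief_traj T bel os as) (sts :: 's::finite list)) = 1"
  unfolding believed_prob_def using believed_sum1[of "belief_traj T bel os as" T]
  by (simp add: belief_traj_def)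

lemma joint_nonneg: "joint_prob M info pol ss os as \<ge> 0"
  unfolding joint_prob_def by (intro mult_nonneg_nonneg prod_nonneg) auto

lemma state_nonneg: "state_prob M info pol ss \<ge> 0"
  unfolding state_prob_def by (intro sum_nonneg joint_nonneg)

lemma outer:
  fixes w g pin :: "'x \<Rightarrow> 'y \<Rightarrow> real"
  assumes fin: "finite A" "finite B"
    and wn: "\<And>x y. x \<in> A \<Longrightarrow> y \<in> B \<Longrightarrow> w x y \<ge> 0"
    and W: "W = (\<Sum>x\<in>A. \<Sum>y\<in>B. w x y)" "W > 0"
    and lo: "\<And>x y. x \<in> A \<Longrightarrow> y \<in> B \<Longrightarrow> h * pin x y \<le> g x y"
    and hi: "\<And>x y. x \<in> A \<Longrightarrow> y \<in> B \<Longrightarrow> g x y \<le> L * pin x y + h * (1 - pin x y)"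
    and P: "P = (\<Sum>x\<in>A. \<Sum>y\<in>B. w x y * pin x y) / W"
    and J: "J = (\<Sum>x\<in>A. \<Sum>y\<in>B. w x y * g x y) / W"
  shows "h * P \<le> J \<and> J \<le> L * P + h * (1 - P)"
proof -
  define SP where "SP = (\<Sum>x\<in>A. \<Sum>y\<in>B. w x y * pin x y)"
  define SG where "SG = (\<Sum>x\<in>A. \<Sum>y\<in>B. w x y * g x y)"
  have "h * SP = (\<Sum>x\<in>A. \<Sum>y\<in>B. w x y * (h * pin x y))"
    unfolding SP_def by (simp add: sum_distrib_left algebra_simps)
  also have "\<dots> \<le> SG" unfolding SG_def
    by (intro sum_mono mult_left_mono lo wn) auto
  finally have 1: "h * SP \<le> SG" .
  have "SG \<le> (\<Sum>x\<in>A. \<Sum>y\<in>B. w x y * (L * pin x y + h * (1 - pin x y)))" unfolding SG_def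
    by (intro sum_mono mult_left_mono hi wn) auto
  also have "\<dots> = L * SP + h * W - h * SP" unfolding SP_def W(1)
    by (simp add: sum_distrib_left algebra_simps sum.distrib sum_subtractf)
  finally have 2: "SG \<le> L * SP + h * W - h * SP" .
  have "P = SP / W" "J = SG / W" using P J SP_def SG_def by auto
  then have e: "SP = P * W" "SG = J * W" using W(2) by auto
  have a: "h * P \<le> J" using 1 W(2) unfolding e by (simp add: mult.assoc[symmetric] mult_le_cancel_right)
  have "J * W \<le> (L * P + h * (1 - P)) * W" using 2 unfolding e by (simp add: algebra_simps)
  then have "J \<le> L * P + h * (1 - P)" using W(2) by (simp add: mult_le_cancel_right)
  then show ?thesis using a by simp
qed

lemma final_ineq:
  fixes h P J L :: real
  assumes "h * P \<le> J" "J \<le> L * P + h * (1 - P)" "0 < P" "P < 1"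
  shows "(J - P * L) / (1 - P) \<le> h" "h \<le> J / P"
  using assms by (auto simp: field_simps)

lemma obs_part:
  fixes M :: "('s::finite, 'a::finite, 'o::finite) pomdp"
  assumes T: "hor M > 0" and sp: "state_prob M info pol ss > 0"
  shows "Hd ss * P_TO M info pol ss \<le> J_O_cond M info pol ss \<and>
         J_O_cond M info pol ss \<le> ln (real CARD('o)) * P_TO M info pol ss + Hd ss * (1 - P_TO M info pol ss)"
proof (rule outer[where A="trajs (hor M)" and B="trajs (hor M - 1)"
      and w="joint_prob M info pol ss" and W="state_prob M info pol ss"
      and pin="\<lambda>os as. if Hd os \<ge> Hd ss then 1 else 0" and g="\<lambda>os as. Hd os"])
  fix os :: "'o list" and as :: "'a list"
  assume os: "os \<in> trajs (hor M)"
  then have "length os > 0" using T by (simp add: trajs_def)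
  then have "Hd os \<le> ln (real CARD('o))" by (rule Hd_le)
  then show "Hd os \<le> ln (real CARD('o)) * (if Hd os \<ge> Hd ss then 1 else 0) + Hd ss * (1 - (if Hd os \<ge> Hd ss then 1 else 0))"
    by auto
  show "Hd ss * (if Hd os \<ge> Hd ss then 1 else 0) \<le> Hd os" using Hd_nonneg[of os] by auto
qed (insert sp, auto simp: joint_nonneg state_prob_def P_TO_def J_O_cond_def cond_exp_def)

lemma bel_part:
  fixes M :: "('s::finite, 'a::finite, 'o::finite) pomdp"
    and bel :: "nat \<Rightarrow> 'o list \<Rightarrow> 'a list \<Rightarrow> 's pmf"
  assumes T: "hor M > 0" and sp: "state_prob M info pol ss > 0"
  shows "Hd ss * pbar_S M info pol bel ss \<le> J_tilde_cond M info pol bel ss \<and>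
         J_tilde_cond M info pol bel ss \<le> ln (real CARD('s)) * pbar_S M info pol bel ss + Hd ss * (1 - pbar_S M info pol bel ss)"
proof (rule outer[where A="trajs (hor M)" and B="trajs (hor M - 1)"
      and w="joint_prob M info pol ss" and W="state_prob M info pol ss"
      and pin="\<lambda>os as. \<Sum>sts\<in>{sts\<in>trajs (hor M). Hd sts \<ge> Hd ss}.
           believed_prob (belief_traj (hor M) bel os as) sts"
      and g="\<lambda>os as. \<Sum>sts\<in>trajs (hor M). believed_prob (belief_traj (hor M) bel os as) sts * Hd sts"])
  fix os :: "'o list" and as :: "'a list"
  define bp where "bp = (\<lambda>sts. believed_prob (belief_traj (hor M) bel os as) (sts::'s list))"
  define L where "L = ln (real CARD('s))"
  define h where "h = Hd ss"
  have fil: "(\<Sum>sts\<in>{sts\<in>trajs (hor M). Hd sts \<ge> h}. bp sts)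
     = (\<Sum>sts\<in>trajs (hor M). if Hd sts \<ge> h then bp sts else 0)"
    by (rule sum.inter_filter) simp
  have s1: "(\<Sum>sts\<in>trajs (hor M). bp sts) = 1" unfolding bp_def by (rule believed_sum)
  have "h * (\<Sum>sts\<in>{sts\<in>trajs (hor M). Hd sts \<ge> h}. bp sts)
      = (\<Sum>sts\<in>trajs (hor M). if Hd sts \<ge> h then h * bp sts else 0)"
    unfolding fil sum_distrib_left by (intro sum.cong) auto
  also have "\<dots> \<le> (\<Sum>sts\<in>trajs (hor M). bp sts * Hd sts)"
  proof (intro sum_mono)
    fix sts :: "'s list"
    have b: "bp sts \<ge> 0" unfolding bp_def by (rule believed_nonneg)
    show "(if Hd sts \<ge> h then h * bp sts else 0) \<le> bp sts * Hd sts"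
      using b Hd_nonneg[of sts] by (auto simp: mult.commute mult_right_mono)
  qed
  finally show "Hd ss * (\<Sum>sts\<in>{sts\<in>trajs (hor M). Hd sts \<ge> Hd ss}. believed_prob (belief_traj (hor M) bel os as) sts)
      \<le> (\<Sum>sts\<in>trajs (hor M). believed_prob (belief_traj (hor M) bel os as) sts * Hd sts)"
    unfolding bp_def h_def .
  have tm: "bp sts * Hd sts \<le> L * (if Hd sts \<ge> h then bp sts else 0) + h * (bp sts - (if Hd sts \<ge> h then bp sts else 0))"
    if "sts \<in> trajs (hor M)" for sts
  proof -
    have "length sts > 0" using that T by (simp add: trajs_def)
    then have "Hd sts \<le> L" unfolding L_def by (rule Hd_le)
    moreover have "bp sts \<ge> 0" unfolding bp_def by (rule believed_nonneg)
    ultimately show ?thesis by (auto simp: mult.commute mult_right_mono less_imp_le)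
  qed
  have "(\<Sum>sts\<in>trajs (hor M). bp sts * Hd sts) \<le>
     (\<Sum>sts\<in>trajs (hor M). L * (if Hd sts \<ge> h then bp sts else 0) + h * (bp sts - (if Hd sts \<ge> h then bp sts else 0)))"
    by (intro sum_mono tm)
  also have "\<dots> = L * (\<Sum>sts\<in>{sts\<in>trajs (hor M). Hd sts \<ge> h}. bp sts) + h * (1 - (\<Sum>sts\<in>{sts\<in>trajs (hor M). Hd sts \<ge> h}. bp sts))"
    unfolding fil s1[symmetric] sum.distrib sum_distrib_left[symmetric] right_diff_distrib sum_subtractf ..
  finally show "(\<Sum>sts\<in>trajs (hor M). believed_prob (belief_traj (hor M) bel os as) sts * Hd sts)
      \<le> ln (real CARD('s)) * (\<Sum>sts\<in>{sts\<in>trajs (hor M). Hd sts \<ge> Hd ss}. believed_prob (belief_traj (hor M) bel os as) sts)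
        + Hd ss * (1 - (\<Sum>sts\<in>{sts\<in>trajs (hor M). Hd sts \<ge> Hd ss}. believed_prob (belief_traj (hor M) bel os as) sts))"
    unfolding bp_def h_def L_def .
qed (insert sp, auto simp: joint_nonneg state_prob_def pbar_S_def J_tilde_cond_def cond_exp_def)

lemma J_S_E: "J_S M info pol = E_S M info pol Hd"
  unfolding J_S_def E_S_def
  by (rule sum.mono_neutral_right) (auto simp: less_le state_nonneg)

lemma E_S_mono:
  assumes "\<And>ss. ss \<in> trajs (hor M) \<Longrightarrow> state_prob M info pol ss > 0 \<Longrightarrow> f ss \<le> g ss"
  shows "E_S M info pol f \<le> E_S M info pol g"
  unfolding E_S_def using assms by (intro sum_mono mult_left_mono) auto

theorem theorem4:
  fixes M :: "('s::finite, 'a::finite, 'o::finite) pomdp"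
    and info :: "nat \<Rightarrow> 'o list \<Rightarrow> 'a list \<Rightarrow> 'i"
    and pol :: "'i \<Rightarrow> 'a pmf"
    and bel :: "nat \<Rightarrow> 'o list \<Rightarrow> 'a list \<Rightarrow> 's pmf"
  assumes T_pos: "hor M > 0"
    and PTO_bounds: "\<And>ss. ss \<in> trajs (hor M) \<Longrightarrow> state_prob M info pol ss > 0 \<Longrightarrow>
           0 < P_TO M info pol ss \<and> P_TO M info pol ss < 1"
    and pbar_bounds: "\<And>ss. ss \<in> trajs (hor M) \<Longrightarrow> state_prob M info pol ss > 0 \<Longrightarrow>
           0 < pbar_S M info pol bel ss \<and> pbar_S M info pol bel ss < 1"
  shows "E_S M info pol (\<lambda>ss. (J_O_cond M info pol ss - P_TO M info pol ss * ln (real CARD('o)))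
                                / (1 - P_TO M info pol ss))
           \<le> J_S M info pol
         \<and> J_S M info pol \<le> E_S M info pol (\<lambda>ss. J_O_cond M info pol ss / P_TO M info pol ss)
         \<and> E_S M info pol (\<lambda>ss. (J_tilde_cond M info pol bel ss - pbar_S M info pol bel ss * ln (real CARD('s)))
                                / (1 - pbar_S M info pol bel ss))
           \<le> J_S M info pol
         \<and> J_S M info pol \<le> E_S M info pol (\<lambda>ss. J_tilde_cond M info pol bel ss / pbar_S M info pol bel ss)"
proof -
  let ?P = "P_TO M info pol" and ?J = "J_O_cond M info pol"
  let ?Q = "pbar_S M info pol bel" and ?K = "J_tilde_cond M info pol bel"
  have o: "(?J ss - ?P ss * ln (real CARD('o))) / (1 - ?P ss) \<le> Hd ss \<and> Hd ss \<le> ?J ss / ?P ss"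
    if "ss \<in> trajs (hor M)" "state_prob M info pol ss > 0" for ss
  proof -
    note a = obs_part[OF T_pos that(2)] PTO_bounds[OF that]
    show ?thesis using final_ineq[of "Hd ss" "?P ss" "?J ss" "ln (real CARD('o))"] a by blast
  qed
  have b: "(?K ss - ?Q ss * ln (real CARD('s))) / (1 - ?Q ss) \<le> Hd ss \<and> Hd ss \<le> ?K ss / ?Q ss"
    if "ss \<in> trajs (hor M)" "state_prob M info pol ss > 0" for ss
  proof -
    note a = bel_part[OF T_pos that(2), of bel] pbar_bounds[OF that]
    show ?thesis using final_ineq[of "Hd ss" "?Q ss" "?K ss" "ln (real CARD('s))"] a by blast
  qed
  show ?thesis unfolding J_S_E
    apply (intro conjI)
    apply (rule E_S_mono, use o in blast)
    apply (rule E_S_mono, use o in blast)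
    apply (rule E_S_mono, use b in blast)
    apply (rule E_S_mono, use b in blast)
    done
qed

end
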